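(* Let $\mathcal{V}$ be a finite vocabulary, $N\ge1$, $\mathcal{S}$ a finite corpus of sequences in $\mathcal{V}^N$, and $q$ a language model on $\mathcal{V}^N$. Let $b\ge0$ and suppose $g:\bigcup_{j=1}^N\mathcal{V}^j\to[0,1]$ has generalized training advantage $\hat\beta(g)\ge b$. Define a distribution $q'$ through its conditional probabilities $$q'(x_j\mid x_1,\dots,x_{j-1})=q(x_j\mid x_1,\dots,x_{j-1})\,e^{-bg(x_1,\dots,x_j)}/Z_{q'}(x_1,\dots,x_{j-1}),$$ where $Z_{q'}(x_1,\dots,x_{j-1})=\sum_{\tilde{x}_j\in\mathcal{V}}q(\tilde{x}_j\mid x_1,\dots,x_{j-1})e^{-bg(x_1,\dots,x_{j-1},\tilde{x}_j)}$. Then $$\hat{L}(q';\mathcal{S})\le\hat{L}(q;\mathcal{S})-Nb^2/2.$$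
   Context: A language model $q$ on $\mathcal{V}^N$ is given by conditionals $q(x_j\mid x_1,\dots,x_{j-1})$, $j=1,\dots,N$ (for $j=1$ this is $q(x_1)$), with $q(x_1,\dots,x_N)=\prod_{j=1}^Nq(x_j\mid x_1,\dots,x_{j-1})$. The log-loss is $\hat{L}(q;\mathcal{S})=-\hat{\mathrm{E}}_{x\sim\mathcal{S}}[\log q(x)]$, where $\hat{\mathrm{E}}_{x\sim\mathcal{S}}$ is the empirical average over sequences in $\mathcal{S}$. The generalized training advantage of $g$ (with respect to $\mathcal{S}$ and $q$) is $$\hat{\beta}(g)=\frac{1}{N}\sum_{j=1}^{N}\hat{\mathrm{E}}_{x\sim\mathcal{S}}\Bigl[\mathrm{E}_{w\sim q(\cdot\mid x_1,\dots,x_{j-1})}g(x_1,\dots,x_{j-1},w)-g(x_1,\dots,x_j)\Bigr].$$ *)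

theory Defs
  imports Complex_Main "HOL-Library.Extended_Real"
begin

(* A language model on V^N (V = the finite type 'v) is given by its conditionals:
   q pfx w = q(w | pfx), for prefixes pfx of length < N. *)
definition lang_model :: "nat \<Rightarrow> ('v::finite list \<Rightarrow> 'v \<Rightarrow> real) \<Rightarrow> bool" where
  "lang_model N q \<longleftrightarrow>
     (\<forall>pfx. length pfx < N \<longrightarrow> (\<forall>w. 0 \<le> q pfx w) \<and> (\<Sum>w\<in>UNIV. q pfx w) = 1)"

definition seq_prob :: "nat \<Rightarrow> ('v list \<Rightarrow> 'v \<Rightarrow> real) \<Rightarrow> 'v list \<Rightarrow> real" where
  "seq_prob N q x = (\<Prod>j<N. q (take j x) (x ! j))"

(* empirical average over the corpus S (a list, duplicates allowed) *)
definition emp_avg :: "'a list \<Rightarrow> ('a \<Rightarrow> real) \<Rightarrow> real" where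
  "emp_avg S f = (\<Sum>x\<leftarrow>S. f x) / real (length S)"

definition log_loss :: "nat \<Rightarrow> ('v list \<Rightarrow> 'v \<Rightarrow> real) \<Rightarrow> 'v list list \<Rightarrow> ereal" where
  "log_loss N q S =
     (if (\<forall>x\<in>set S. 0 < seq_prob N q x)
      then ereal (- emp_avg S (\<lambda>x. ln (seq_prob N q x)))
      else \<infinity>)"

(* generalized training advantage, 0-indexed: position j has prefix take j x, token x!j *)
definition gen_train_adv ::
  "nat \<Rightarrow> ('v::finite list \<Rightarrow> 'v \<Rightarrow> real) \<Rightarrow> 'v list list \<Rightarrow> ('v list \<Rightarrow> real) \<Rightarrow> real" where
  "gen_train_adv N q S g =
     (1 / real N) * (\<Sum>j<N. emp_avg S (\<lambda>x.
        (\<Sum>w\<in>UNIV. q (take j x) w * g (take j x @ [w])) - g (take (Suc j) x)))"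

definition tilt_Z :: "('v::finite list \<Rightarrow> 'v \<Rightarrow> real) \<Rightarrow> ('v list \<Rightarrow> real) \<Rightarrow> real \<Rightarrow> 'v list \<Rightarrow> real" where
  "tilt_Z q g b pfx = (\<Sum>w\<in>UNIV. q pfx w * exp (- b * g (pfx @ [w])))"

definition tilt :: "('v::finite list \<Rightarrow> 'v \<Rightarrow> real) \<Rightarrow> ('v list \<Rightarrow> real) \<Rightarrow> real \<Rightarrow> 'v list \<Rightarrow> 'v \<Rightarrow> real" where
  "tilt q g b pfx w = q pfx w * exp (- b * g (pfx @ [w])) / tilt_Z q g b pfx"

end

theory Submission
  imports Defs
begin

lemma exp_neg_quad:
  fixes t :: real assumes "0 \<le> t"
  shows "exp (- t) \<le> 1 - t + t\<^sup>2 / 2"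
proof -
  let ?f = "\<lambda>x::real. 1 - x + x\<^sup>2/2 - exp (- x)"
  have "?f 0 \<le> ?f t"
  proof (rule DERIV_nonneg_imp_increasing_open[OF assms])
    fix x :: real assume "0 < x" "x < t"
    have "DERIV ?f x :> (- 1 + x + exp (- x))"
      by (auto intro!: derivative_eq_intros simp: power2_eq_square)
    moreover have "0 \<le> - 1 + x + exp (- x)" using exp_ge_add_one_self[of "-x"] by simp
    ultimately show "\<exists>y. DERIV ?f x :> y \<and> 0 \<le> y" by blast
  next
    show "continuous_on {0..t} ?f" by (intro continuous_intros) auto
  qed
  then show ?thesis by simp
qed

lemma lnZ_bound:
  fixes p :: "'a::finite \<Rightarrow> real" and G :: "'a \<Rightarrow> real" and b :: real
  assumes p0: "\<And>w. 0 \<le> p w" and p1: "(\<Sum>w\<in>UNIV. p w) = 1"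
    and G: "\<And>w. 0 \<le> G w \<and> G w \<le> 1" and b: "0 \<le> b"
  shows "0 < (\<Sum>w\<in>UNIV. p w * exp (- b * G w))"
    and "ln (\<Sum>w\<in>UNIV. p w * exp (- b * G w)) \<le> - b * (\<Sum>w\<in>UNIV. p w * G w) + b\<^sup>2 / 2"
proof -
  have "(\<Sum>w\<in>UNIV. p w * exp (- b)) \<le> (\<Sum>w\<in>UNIV. p w * exp (- b * G w))"
    by (intro sum_mono mult_left_mono) (use p0 G b in \<open>auto intro: mult_left_le_one_le mult_right_le_one_le\<close>)
  moreover have "(\<Sum>w\<in>UNIV. p w * exp (- b)) = exp (- b)"
    using p1 by (simp add: sum_distrib_right[symmetric])
  ultimately show pos: "0 < (\<Sum>w\<in>UNIV. p w * exp (- b * G w))"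
    by (metis exp_gt_zero order_less_le_trans)
  have "(\<Sum>w\<in>UNIV. p w * exp (- b * G w)) \<le> (\<Sum>w\<in>UNIV. p w * (1 - b * G w + b\<^sup>2 / 2))"
  proof (intro sum_mono mult_left_mono)
    fix w
    have "exp (- (b * G w)) \<le> 1 - b * G w + (b * G w)\<^sup>2 / 2"
      by (rule exp_neg_quad) (use G b in auto)
    also have "(b * G w)\<^sup>2 \<le> b\<^sup>2"
      using G[of w] b by (simp add: power_mult_distrib) (intro mult_right_le_one_le power_le_one, auto)
    finally show "exp (- b * G w) \<le> 1 - b * G w + b\<^sup>2 / 2" by simp
  qed (use p0 in auto)
  also have "\<dots> = 1 - b * (\<Sum>w\<in>UNIV. p w * G w) + b\<^sup>2 / 2"
    using p1 by (simp add: algebra_simps sum.distrib sum_subtractf sum_distrib_left sum_distrib_right[symmetric])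
  finally show "ln (\<Sum>w\<in>UNIV. p w * exp (- b * G w)) \<le> - b * (\<Sum>w\<in>UNIV. p w * G w) + b\<^sup>2 / 2"
    using ln_le_minus_one[OF pos] by linarith
qed

lemma sum_list_sum_swap:
  "(\<Sum>x\<leftarrow>S. \<Sum>j\<in>A. f j x) = (\<Sum>j\<in>A. \<Sum>x\<leftarrow>S. f j x)"
  by (induction S) (auto simp: sum.distrib)

theorem lemma3:
  fixes N :: nat and q :: "'v::finite list \<Rightarrow> 'v \<Rightarrow> real"
    and S :: "'v list list" and g :: "'v list \<Rightarrow> real" and b :: real
  assumes "N \<ge> 1"
    and "S \<noteq> []"
    and "\<forall>x\<in>set S. length x = N"
    and "lang_model N q"
    and "b \<ge> 0"
    and "\<forall>xs. 1 \<le> length xs \<and> length xs \<le> N \<longrightarrow> 0 \<le> g xs \<and> g xs \<le> 1"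
    and "gen_train_adv N q S g \<ge> b"
  shows "log_loss N (tilt q g b) S \<le> log_loss N q S - ereal (real N * b\<^sup>2 / 2)"
proof (cases "\<forall>x\<in>set S. 0 < seq_prob N q x")
  case False
  then have "log_loss N q S = \<infinity>" by (simp add: log_loss_def)
  then show ?thesis by simp
next
  case True
  note lenS = assms(3) and lm = assms(4)[unfolded lang_model_def] and b0 = assms(5) and gb = assms(6)
  define E where "E x j = (\<Sum>w\<in>UNIV. q (take j x) w * g (take j x @ [w]))" for x j
  define D where "D x = (\<Sum>j<N. E x j - g (take (Suc j) x))" for x
  have key: "ln (seq_prob N (tilt q g b) x) \<ge> ln (seq_prob N q x) + b * D x - real N * b\<^sup>2 / 2
        \<and> 0 < seq_prob N (tilt q g b) x" if x: "x \<in> set S" for x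
  proof -
    have lx: "length x = N" using lenS x by auto
    have qj: "0 < q (take j x) (x ! j)" if j: "j < N" for j
    proof -
      have "(\<Prod>j<N. q (take j x) (x ! j)) \<noteq> 0"
      proof -
        have "0 < seq_prob N q x" using True x by blast
        then show ?thesis unfolding seq_prob_def by linarith
      qed
      then have "q (take j x) (x ! j) \<noteq> 0"
        using j by (simp add: prod_zero_iff)
      moreover have "0 \<le> q (take j x) (x ! j)" using lm j lx by auto
      ultimately show ?thesis by simp
    qed
    have Gj: "0 \<le> g (take j x @ [w]) \<and> g (take j x @ [w]) \<le> 1" if "j < N" for j w
      using gb that lx by auto
    have Zpos: "0 < tilt_Z q g b (take j x)" and
      Zb: "ln (tilt_Z q g b (take j x)) \<le> - b * E x j + b\<^sup>2 / 2" if j: "j < N" for j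
      using lnZ_bound[of "q (take j x)" "\<lambda>w. g (take j x @ [w])" b] lm j lx Gj[OF j] b0
      by (auto simp: tilt_Z_def E_def)
    have tsx: "take (Suc j) x = take j x @ [x ! j]" if "j < N" for j
      using that lx by (simp add: take_Suc_conv_app_nth)
    have tpos: "0 < tilt q g b (take j x) (x ! j)" if "j < N" for j
      using qj[OF that] Zpos[OF that] by (simp add: tilt_def)
    have lnt: "ln (tilt q g b (take j x) (x ! j)) \<ge>
        ln (q (take j x) (x ! j)) + b * (E x j - g (take (Suc j) x)) - b\<^sup>2 / 2" if j: "j < N" for j
    proof -
      have "ln (tilt q g b (take j x) (x ! j)) =
          ln (q (take j x) (x ! j)) - b * g (take (Suc j) x) - ln (tilt_Z q g b (take j x))"
        using qj[OF j] Zpos[OF j] tsx[OF j] by (simp add: tilt_def ln_div ln_mult)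
      then show ?thesis using Zb[OF j] by (simp add: algebra_simps)
    qed
    have "ln (seq_prob N (tilt q g b) x) = (\<Sum>j<N. ln (tilt q g b (take j x) (x ! j)))"
      unfolding seq_prob_def by (rule ln_prod) (auto dest!: tpos)
    also have "\<dots> \<ge> (\<Sum>j<N. ln (q (take j x) (x ! j)) + b * (E x j - g (take (Suc j) x)) - b\<^sup>2 / 2)"
      by (rule sum_mono) (use lnt in auto)
    finally have "ln (seq_prob N (tilt q g b) x) \<ge>
       (\<Sum>j<N. ln (q (take j x) (x ! j))) + b * D x - real N * b\<^sup>2 / 2"
      by (simp add: D_def sum.distrib sum_subtractf sum_distrib_left right_diff_distrib)
    moreover have "ln (seq_prob N q x) = (\<Sum>j<N. ln (q (take j x) (x ! j)))"
      unfolding seq_prob_def by (rule ln_prod) (auto dest!: qj)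
    moreover have "0 < seq_prob N (tilt q g b) x"
      unfolding seq_prob_def by (rule prod_pos) (use tpos in auto)
    ultimately show ?thesis by simp
  qed
  have adv: "gen_train_adv N q S g = (1 / real N) * emp_avg S D"
    unfolding gen_train_adv_def emp_avg_def D_def E_def
    by (simp add: sum_list_sum_swap sum_divide_distrib)
  have NS: "0 < real N" "0 < real (length S)" using assms(1,2) by auto
  have avgD: "emp_avg S D \<ge> real N * b"
    using assms(7) adv NS by (simp add: field_simps)
  define L where "L = real (length S)"
  define A where "A = (\<Sum>x\<leftarrow>S. ln (seq_prob N q x))"
  define T where "T = (\<Sum>x\<leftarrow>S. ln (seq_prob N (tilt q g b) x))"
  define c where "c = real N * b\<^sup>2 / 2"
  have h1: "(\<Sum>x\<leftarrow>S. ln (seq_prob N q x) + b * D x - c) \<le> T"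
    unfolding T_def c_def by (rule sum_list_mono) (use key in auto)
  have h2: "(\<Sum>x\<leftarrow>S. ln (seq_prob N q x) + b * D x - c)
     = A + b * (\<Sum>x\<leftarrow>S. D x) - L * c"
    unfolding A_def L_def by (simp add: sum_list_addf sum_list_subtractf sum_list_const_mult sum_list_triv)
  have "(A + b * (\<Sum>x\<leftarrow>S. D x) - L * c) / L \<le> T / L"
    using h1 h2 NS(2) unfolding L_def by (intro divide_right_mono) auto
  moreover have "(A + b * (\<Sum>x\<leftarrow>S. D x) - L * c) / L = A / L + b * ((\<Sum>x\<leftarrow>S. D x) / L) - c"
    using NS(2) unfolding L_def by (simp add: field_simps)
  ultimately have "A / L + b * ((\<Sum>x\<leftarrow>S. D x) / L) - c \<le> T / L" by simp
  then have "emp_avg S (\<lambda>x. ln (seq_prob N q x)) + b * emp_avg S D - real N * b\<^sup>2 / 2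
        \<le> emp_avg S (\<lambda>x. ln (seq_prob N (tilt q g b) x))"
    by (simp add: emp_avg_def A_def T_def L_def c_def)
  moreover have "b * emp_avg S D \<ge> b * (real N * b)" using avgD b0 by (rule mult_left_mono)
  ultimately have "- emp_avg S (\<lambda>x. ln (seq_prob N (tilt q g b) x))
      \<le> - emp_avg S (\<lambda>x. ln (seq_prob N q x)) - real N * b\<^sup>2 / 2"
    by (simp add: power2_eq_square algebra_simps)
  then show ?thesis using True key by (simp add: log_loss_def)
qed

end
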